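(* Let $A$ and $B$ be automata such that $B$ is deterministic and $A\le_{*T}B$. Then $A\le_F B$.
   Context: An automaton $A$ consists of a set $\mathrm{states}(A)$ of states, a nonempty set $\mathrm{start}(A)\subseteq\mathrm{states}(A)$ of start states, a set $\mathrm{acts}(A)$ of actions containing a distinguished internal action $\tau$, and a set $\mathrm{steps}(A)\subseteq\mathrm{states}(A)\times\mathrm{acts}(A)\times\mathrm{states}(A)$ of steps; write $s\xrightarrow{a}_A t$ for $(s,a,t)\in\mathrm{steps}(A)$. An execution fragment of $A$ is a finite or infinite alternating sequence $s_0a_1s_1a_2s_2\cdots$ of states and actions, beginning with a state and, if finite, ending with a state, such that $s_{i-1}\xrightarrow{a_i}_A s_i$ for all $i>0$. An execution is an execution fragment whose first state is a start state. The trace of an execution fragment is the subsequence of its non-$\tau$ actions; a trace of $A$ is the trace of some execution of $A$, and $\mathrm{traces}^*(A)$ is the set of finite traces of $A$. $A\le_{*T}B$ means $\mathrm{traces}^*(A)\subseteq\mathrm{traces}^*(B)$. For states $s,t$ and a finite sequence $\beta$ of non-$\tau$ actions, write $s\stackrel{\beta}{\Rightarrow}_A t$ if $A$ has a finite execution fragment starting in $s$, with trace $\beta$, ending in $t$. $A$ is deterministic if $|\mathrm{start}(A)|=1$ and for every state $s$ and finite sequence $\beta$ of non-$\tau$ actions there is at most one $t$ with $s\stackrel{\beta}{\Rightarrow}_A t$. For a relation $R$ write $R[s]=\{u\mid (s,u)\in R\}$. A normed forward simulation from $A$ to $B$ is a pair $(f,n)$ where $f\subseteq\mathrm{states}(A)\times\mathrm{states}(B)$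 and $n:\mathrm{steps}(A)\times\mathrm{states}(B)\to S$ for some set $S$ with a well-founded strict order $<$, such that: (1) if $s\in\mathrm{start}(A)$ then $f[s]\cap\mathrm{start}(B)\neq\emptyset$; (2) if $s\xrightarrow{a}_A t$ and $u\in f[s]$ then (a) $u\in f[t]$ and $a=\tau$, or (b) there is $v\in f[t]$ with $u\xrightarrow{a}_B v$, or (c) there is $v\in f[s]$ with $u\xrightarrow{\tau}_B v$ and $n(s\xrightarrow{a}t,v)<n(s\xrightarrow{a}t,u)$. Write $A\le_F B$ if one exists. *)

theory Defs
  imports Main
begin

text \<open>Automata over a common action type; the distinguished internal action is
  the parameter tau.\<close>

record ('s, 'a) automaton =
  aut_states :: "'s set"
  aut_start  :: "'s set"
  aut_acts   :: "'a set"
  aut_steps  :: "('s \<times> 'a \<times> 's) set"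

definition is_automaton :: "'a \<Rightarrow> ('s, 'a) automaton \<Rightarrow> bool" where
  "is_automaton tau A \<longleftrightarrow>
     aut_start A \<subseteq> aut_states A \<and> aut_start A \<noteq> {} \<and> tau \<in> aut_acts A \<and>
     aut_steps A \<subseteq> aut_states A \<times> aut_acts A \<times> aut_states A"

inductive weak_step :: "'a \<Rightarrow> ('s, 'a) automaton \<Rightarrow> 's \<Rightarrow> 'a list \<Rightarrow> 's \<Rightarrow> bool"
  for tau A where
  refl: "s \<in> aut_states A \<Longrightarrow> weak_step tau A s [] s"
| step: "(s, a, s') \<in> aut_steps A \<Longrightarrow> weak_step tau A s' beta t \<Longrightarrow>
         weak_step tau A s (if a = tau then beta else a # beta) t"

definition fin_traces :: "'a \<Rightarrow> ('s, 'a) automaton \<Rightarrow> 'a list set" where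
  "fin_traces tau A = {beta. \<exists>s0 t. s0 \<in> aut_start A \<and> weak_step tau A s0 beta t}"

definition trace_incl :: "'a \<Rightarrow> ('s1, 'a) automaton \<Rightarrow> ('s2, 'a) automaton \<Rightarrow> bool" where
  "trace_incl tau A B \<longleftrightarrow> fin_traces tau A \<subseteq> fin_traces tau B"

definition deterministic :: "'a \<Rightarrow> ('s, 'a) automaton \<Rightarrow> bool" where
  "deterministic tau A \<longleftrightarrow> card (aut_start A) = 1 \<and>
     (\<forall>s beta t t'. (\<forall>x\<in>set beta. x \<noteq> tau) \<and> weak_step tau A s beta t \<and> weak_step tau A s beta t'
        \<longrightarrow> t = t')"

text \<open>Normed forward simulation (f, n) with norm values in a set 'c ordered by
  the well-founded strict order R (pairs (x, y) \<in> R mean x < y).\<close>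

definition normed_fwd_sim ::
  "'a \<Rightarrow> ('s1, 'a) automaton \<Rightarrow> ('s2, 'a) automaton \<Rightarrow> ('s1 \<times> 's2) set
   \<Rightarrow> (('s1 \<times> 'a \<times> 's1) \<Rightarrow> 's2 \<Rightarrow> 'c) \<Rightarrow> ('c \<times> 'c) set \<Rightarrow> bool" where
  "normed_fwd_sim tau A B f n R \<longleftrightarrow>
     f \<subseteq> aut_states A \<times> aut_states B \<and> wf R \<and> trans R \<and>
     (\<forall>s\<in>aut_start A. f `` {s} \<inter> aut_start B \<noteq> {}) \<and>
     (\<forall>s a t u. (s, a, t) \<in> aut_steps A \<and> u \<in> f `` {s} \<longrightarrow>
        (u \<in> f `` {t} \<and> a = tau) \<or>
        (\<exists>v \<in> f `` {t}. (u, a, v) \<in> aut_steps B) \<or>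
        (\<exists>v \<in> f `` {s}. (u, tau, v) \<in> aut_steps B \<and> (n (s, a, t) v, n (s, a, t) u) \<in> R))"

definition fwd_le :: "'c itself \<Rightarrow> 'a \<Rightarrow> ('s1, 'a) automaton \<Rightarrow> ('s2, 'a) automaton \<Rightarrow> bool" where
  "fwd_le _ tau A B \<longleftrightarrow>
     (\<exists>f (n :: ('s1 \<times> 'a \<times> 's1) \<Rightarrow> 's2 \<Rightarrow> 'c) R. normed_fwd_sim tau A B f n R)"

end

theory Submission
  imports Defs
begin

lemma ws_states:
  assumes "aut_steps A \<subseteq> aut_states A \<times> aut_acts A \<times> aut_states A"
  shows "weak_step tau A s b t \<Longrightarrow> s \<in> aut_states A \<and> t \<in> aut_states A"
  by (induction rule: weak_step.induct) (use assms in auto)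

lemma ws_notau: "weak_step tau A s b t \<Longrightarrow> \<forall>x\<in>set b. x \<noteq> tau"
  by (induction rule: weak_step.induct) auto

lemma ws_trans: "weak_step tau A s b t \<Longrightarrow> weak_step tau A t c r \<Longrightarrow> weak_step tau A s (b @ c) r"
proof (induction rule: weak_step.induct)
  case (refl s) then show ?case by simp
next
  case (step s a s' beta t)
  then have "weak_step tau A s (if a = tau then beta @ c else a # (beta @ c)) r"
    using weak_step.step[OF step.hyps(1) step.IH[OF step.prems]] by simp
  then show ?case by (cases "a = tau") simp_all
qed

lemma ws_split:
  assumes "aut_steps A \<subseteq> aut_states A \<times> aut_acts A \<times> aut_states A"
  shows "weak_step tau A s d r \<Longrightarrow> d = b @ c \<Longrightarrow> \<exists>t. weak_step tau A s b t \<and> weak_step tau A t c r"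
proof (induction arbitrary: b rule: weak_step.induct)
  case (refl s) then show ?case using weak_step.refl[of s A tau] by auto
next
  case (step s a s' beta t)
  have sS: "s \<in> aut_states A" using step.hyps(1) assms by auto
  show ?case
  proof (cases "a = tau")
    case True
    then obtain m where "weak_step tau A s' b m" "weak_step tau A m c t" using step by auto
    moreover have "weak_step tau A s (if a = tau then b else a # b) m"
      using weak_step.step[OF step.hyps(1) \<open>weak_step tau A s' b m\<close>] .
    ultimately show ?thesis using True by auto
  next
    case False
    show ?thesis
    proof (cases b)
      case Nil
      then show ?thesis using weak_step.refl[OF sS] step.hyps step.prems False
        weak_step.step[OF step.hyps(1) step.hyps(2)] by auto
    next
      case (Cons x b')
      then have "x = a" "beta = b' @ c" using step.prems False by auto
      then obtain m where "weak_step tau A s' b' m" "weak_step tau A m c t" using step by auto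
      moreover have "weak_step tau A s (if a = tau then b' else a # b') m"
        using weak_step.step[OF step.hyps(1) \<open>weak_step tau A s' b' m\<close>] .
      ultimately show ?thesis using False Cons \<open>x = a\<close> by auto
    qed
  qed
qed

lemma ws_first:
  assumes "\<And>u v. (u, tau, v) \<in> aut_steps A \<Longrightarrow> u = v" and "a \<noteq> tau"
  shows "weak_step tau A s d w \<Longrightarrow> d = a # g \<Longrightarrow> \<exists>v. (s, a, v) \<in> aut_steps A \<and> weak_step tau A v g w"
proof (induction rule: weak_step.induct)
  case (refl s) then show ?case by simp
next
  case (step s b s' beta t)
  show ?case
  proof (cases "b = tau")
    case True
    then show ?thesis using step assms(1) by auto
  next
    case False
    then show ?thesis using step by auto
  qed
qed

theorem mainTheorem5:
  fixes tau :: 'a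
    and A :: "('s1, 'a) automaton"
    and B :: "('s2, 'a) automaton"
  assumes "is_automaton tau A"
    and "is_automaton tau B"
    and "deterministic tau B"
    and "trace_incl tau A B"
  shows "fwd_le TYPE('c) tau A B"
proof -
  have stA: "aut_steps A \<subseteq> aut_states A \<times> aut_acts A \<times> aut_states A"
    "aut_start A \<subseteq> aut_states A" using assms(1) unfolding is_automaton_def by blast+
  have stB: "aut_steps B \<subseteq> aut_states B \<times> aut_acts B \<times> aut_states B"
    "aut_start B \<subseteq> aut_states B" using assms(2) unfolding is_automaton_def by blast+
  have card: "card (aut_start B) = 1"
    using assms(3) unfolding deterministic_def by simp
  have det: "\<And>s beta t t'. (\<forall>x\<in>set beta. x \<noteq> tau) \<Longrightarrow>
     weak_step tau B s beta t \<Longrightarrow> weak_step tau B s beta t' \<Longrightarrow> t = t'"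
    using assms(3) unfolding deterministic_def by metis
  have uniq: "\<And>x y. x \<in> aut_start B \<Longrightarrow> y \<in> aut_start B \<Longrightarrow> x = y"
    using card by (metis card_1_singletonE singletonD)
  have tloop: "\<And>u v. (u, tau, v) \<in> aut_steps B \<Longrightarrow> u = v"
  proof -
    fix u v assume h: "(u, tau, v) \<in> aut_steps B"
    then have "u \<in> aut_states B" "v \<in> aut_states B" using stB by auto
    then have "weak_step tau B u [] u" "weak_step tau B u [] v"
      using weak_step.refl[of u B tau] weak_step.step[OF h weak_step.refl[of v B tau]] by auto
    then show "u = v" using det[of "[]" u u v] by simp
  qed
  have incl: "\<And>b. b \<in> fin_traces tau A \<Longrightarrow> b \<in> fin_traces tau B"
    using assms(4) unfolding trace_incl_def by auto
  define f where "f = {(s, u). \<exists>b s0 u0. s0 \<in> aut_start A \<and> weak_step tau A s0 b s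
      \<and> u0 \<in> aut_start B \<and> weak_step tau B u0 b u}"
  have fI: "\<And>b s0 s u0 u. s0 \<in> aut_start A \<Longrightarrow> weak_step tau A s0 b s \<Longrightarrow>
     u0 \<in> aut_start B \<Longrightarrow> weak_step tau B u0 b u \<Longrightarrow> u \<in> f `` {s}"
    unfolding f_def by auto
  define n :: "('s1 \<times> 'a \<times> 's1) \<Rightarrow> 's2 \<Rightarrow> 'c" where "n = (\<lambda>_ _. undefined)"
  have c1: "f \<subseteq> aut_states A \<times> aut_states B"
    proof (rule subsetI, clarify)
      fix s u assume "(s, u) \<in> f"
      then obtain b s0 u0 where "weak_step tau A s0 b s" "weak_step tau B u0 b u"
        unfolding f_def by blast
      then show "s \<in> aut_states A \<and> u \<in> aut_states B"
        using ws_states[OF stA(1)] ws_states[OF stB(1)] by blast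
    qed
  have c2: "\<forall>s\<in>aut_start A. f `` {s} \<inter> aut_start B \<noteq> {}"
  proof
    fix s assume s: "s \<in> aut_start A"
    then have "weak_step tau A s [] s" using stA(2) by (intro weak_step.refl) blast
    then have "[] \<in> fin_traces tau B" using incl s unfolding fin_traces_def by blast
    then obtain u0 t where u0: "u0 \<in> aut_start B" "weak_step tau B u0 [] t"
      unfolding fin_traces_def by blast
    then have "weak_step tau B u0 [] u0" using stB(2) by (intro weak_step.refl) blast
    then have "u0 \<in> f `` {s} \<inter> aut_start B" using u0 s \<open>weak_step tau A s [] s\<close>
      fI by blast
    then show "f `` {s} \<inter> aut_start B \<noteq> {}" by blast
  qed
  have c3: "\<And>s a t u. (s, a, t) \<in> aut_steps A \<and> u \<in> f `` {s} \<Longrightarrow>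
        (u \<in> f `` {t} \<and> a = tau) \<or>
        (\<exists>v \<in> f `` {t}. (u, a, v) \<in> aut_steps B) \<or>
        (\<exists>v \<in> f `` {s}. (u, tau, v) \<in> aut_steps B \<and> (n (s, a, t) v, n (s, a, t) u) \<in> {})"
  proof -
    fix s a t u assume h: "(s, a, t) \<in> aut_steps A \<and> u \<in> f `` {s}"
    then have "(s, u) \<in> f" by blast
    then obtain b s0 u0 where b: "s0 \<in> aut_start A" "weak_step tau A s0 b s"
      "u0 \<in> aut_start B" "weak_step tau B u0 b u" unfolding f_def by blast
    have tS: "t \<in> aut_states A" using h stA by auto
    have st: "weak_step tau A s (if a = tau then [] else [a]) t"
      using weak_step.step[OF conjunct1[OF h] weak_step.refl[OF tS]] by simp
    show "(u \<in> f `` {t} \<and> a = tau) \<or>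
        (\<exists>v \<in> f `` {t}. (u, a, v) \<in> aut_steps B) \<or>
        (\<exists>v \<in> f `` {s}. (u, tau, v) \<in> aut_steps B \<and> (n (s, a, t) v, n (s, a, t) u) \<in> {})"
    proof (cases "a = tau")
      case True
      then have "weak_step tau A s0 b t" using ws_trans[OF b(2) st] by simp
      then have "u \<in> f `` {t}" using b fI by blast
      then show ?thesis using True by blast
    next
      case False
      then have w: "weak_step tau A s0 (b @ [a]) t" using ws_trans[OF b(2) st] by simp
      then have "b @ [a] \<in> fin_traces tau B" using incl b(1) unfolding fin_traces_def by blast
      then obtain u1 w where u1: "u1 \<in> aut_start B" "weak_step tau B u1 (b @ [a]) w"
        unfolding fin_traces_def by blast
      then have "u1 = u0" using uniq b(3) by blast
      obtain x where x: "weak_step tau B u0 b x" "weak_step tau B x [a] w"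
        using ws_split[OF stB(1) u1(2)[unfolded \<open>u1 = u0\<close>], of b "[a]"] by blast
      have "x = u" using det[OF ws_notau[OF b(4)] x(1) b(4)] .
      then obtain v where v: "(u, a, v) \<in> aut_steps B"
        using ws_first[OF tloop False x(2)[unfolded \<open>x = u\<close>], of "[]"] by blast
      then have "v \<in> aut_states B" using stB by auto
      then have "weak_step tau B u (if a = tau then [] else [a]) v"
        by (rule weak_step.step[OF v weak_step.refl])
      then have "weak_step tau B u [a] v" using False by simp
      then have "weak_step tau B u0 (b @ [a]) v" using ws_trans[OF b(4)] by blast
      then have "v \<in> f `` {t}" using w b(1,3) fI by blast
      then show ?thesis using v by blast
    qed
  qed
  have "normed_fwd_sim tau A B f n {}"
    unfolding normed_fwd_sim_def using c1 c2 c3 by (simp add: trans_def)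
  then show ?thesis unfolding fwd_le_def by blast
qed

end
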